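(* Let $S$ be an affine semigroup, $K$ a field, $F$ a nonempty face of $\mathrm{pos}(S)$, and $\gamma_1,\ldots,\gamma_k\in S$. Suppose that $\widetilde{S_F}$ is a free commutative monoid and the images of $\gamma_1,\ldots,\gamma_k$ form a basis of it. Then: (1) $F$ is contained in precisely $k$ facets $F_i=\mathrm{pos}(S)\cap H_i$ ($i=1,\ldots,k$) of $\mathrm{pos}(S)$, and $F=F_1\cap\cdots\cap F_k$; (2) $\sigma_i(\gamma_j)=\delta_{ij}$ for all $1\le i,j\le k$, where $\sigma_i$ is the primitive linear form associated with $H_i$; (3) $\mathrm{grp}(S\cap F)=\mathrm{grp}(S)\cap H_1\cap\cdots\cap H_k$.
   Context: An affine semigroup is a finitely generated submonoid $S$ of $\mathbb{Z}^n$ (containing $0$) with $\mathrm{grp}(S)=\mathbb{Z}^n$. $\mathrm{pos}(S)$ is the set of nonnegative real linear combinations of elements of $S$; a face is its intersection with a supporting hyperplane, and a facet is a face of codimension one (codimension $=n-\dim$ of the linear span). Each facet has the form $\mathrm{pos}(S)\cap H$ where $H=\{\sigma=0\}$ and $\sigma$ is a primitive linear form (a linear form with relatively prime integer coefficients) with $\sigma\ge 0$ on $\mathrm{pos}(S)$; $\sigma$ is called the primitive linear form associated with $H$. $S_F=\{\alpha-\beta:\alpha\in S,\beta\in S\cap F\}$, whose group of units is $\mathrm{grp}(S\cap F)$, and $\widetilde{S_F}$ is the quotient of $S_F$ by its group of units. *)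

theory Defs
  imports "HOL-Analysis.Analysis"
begin

text \<open>Lattice points of Z^n are int^'n; real points of R^n are real^'n.
  The dimension n = CARD('n) is an arbitrary (type-level) fixed positive integer.\<close>

definition rvec :: "int^'n \<Rightarrow> real^'n" where
  "rvec v = (\<chi> i. real_of_int (v $ i))"

definition ilf :: "int^'n \<Rightarrow> int^'n \<Rightarrow> int" where
  "ilf \<sigma> v = (\<Sum>i\<in>UNIV. \<sigma> $ i * v $ i)"

definition rlf :: "int^'n \<Rightarrow> real^'n \<Rightarrow> real" where
  "rlf \<sigma> x = (\<Sum>i\<in>UNIV. real_of_int (\<sigma> $ i) * x $ i)"

definition primitive_form :: "int^'n \<Rightarrow> bool" where
  "primitive_form \<sigma> \<longleftrightarrow> Gcd (range (\<lambda>i. \<sigma> $ i)) = 1"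

definition grp :: "(int^'n) set \<Rightarrow> (int^'n) set" where
  "grp X = {x. \<exists>T c. finite T \<and> T \<subseteq> X \<and>
      x = (\<Sum>v\<in>T. (\<chi> i. c v * v $ i))}"

definition monoid_gen :: "(int^'n) set \<Rightarrow> (int^'n) set" where
  "monoid_gen G = {x. \<exists>T c. finite T \<and> T \<subseteq> G \<and> (\<forall>v\<in>T. c v \<ge> 0) \<and>
      x = (\<Sum>v\<in>T. (\<chi> i. c v * v $ i))}"

definition affine_semigroup :: "(int^'n) set \<Rightarrow> bool" where
  "affine_semigroup S \<longleftrightarrow> (\<exists>G. finite G \<and> S = monoid_gen G) \<and> grp S = UNIV"

definition pos :: "(int^'n) set \<Rightarrow> (real^'n) set" where
  "pos S = {x. \<exists>T c. finite T \<and> T \<subseteq> S \<and> (\<forall>v\<in>T. c v \<ge> (0::real)) \<and>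
      x = (\<Sum>v\<in>T. c v *\<^sub>R rvec v)}"

text \<open>A face: intersection of pos(S) with the zero set of a linear form that is
  nonnegative on pos(S) (the zero form gives pos(S) itself).\<close>
definition is_face :: "(int^'n) set \<Rightarrow> (real^'n) set \<Rightarrow> bool" where
  "is_face S F \<longleftrightarrow> (\<exists>l::real^'n. (\<forall>x\<in>pos S. l \<bullet> x \<ge> 0) \<and>
      F = {x \<in> pos S. l \<bullet> x = 0})"

definition is_facet :: "(int^'n) set \<Rightarrow> (real^'n) set \<Rightarrow> bool" where
  "is_facet S F \<longleftrightarrow> is_face S F \<and> dim F = CARD('n) - 1"

definition lat_in :: "(int^'n) set \<Rightarrow> (real^'n) set \<Rightarrow> (int^'n) set" where
  "lat_in S F = {s \<in> S. rvec s \<in> F}"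

definition S_loc :: "(int^'n) set \<Rightarrow> (real^'n) set \<Rightarrow> (int^'n) set" where
  "S_loc S F = {a - b | a b. a \<in> S \<and> b \<in> lat_in S F}"

text \<open>The quotient of S_F by its group of units grp(S \<inter> F) is a free commutative
  monoid with basis the images of gamma_0..gamma_(k-1): every element of S_F is
  congruent modulo grp(S \<inter> F) to a unique N-combination of the gammas.\<close>
definition free_basis_mod :: "(int^'n) set \<Rightarrow> (real^'n) set \<Rightarrow> nat \<Rightarrow> (nat \<Rightarrow> int^'n) \<Rightarrow> bool" where
  "free_basis_mod S F k \<gamma> \<longleftrightarrow>
     (\<forall>x\<in>S_loc S F.
        (\<exists>m::nat\<Rightarrow>nat. x - (\<Sum>j<k. (\<chi> i. int (m j) * \<gamma> j $ i)) \<in> grp (lat_in S F)) \<and>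
        (\<forall>m m'::nat\<Rightarrow>nat.
           x - (\<Sum>j<k. (\<chi> i. int (m j) * \<gamma> j $ i)) \<in> grp (lat_in S F) \<longrightarrow>
           x - (\<Sum>j<k. (\<chi> i. int (m' j) * \<gamma> j $ i)) \<in> grp (lat_in S F) \<longrightarrow>
           (\<forall>j<k. m j = m' j)))"

end

theory Submission
  imports Defs
begin


lemma smult_chi: "(\<chi> i. c * v $ i) = c *s (v::int^'n)"
  by (simp add: vector_scalar_mult_def)

lemma grp_alt: "grp X = {x. \<exists>T c. finite T \<and> T \<subseteq> X \<and> x = (\<Sum>v\<in>T. c v *s v)}"
  by (simp add: grp_def smult_chi)

lemma monoid_gen_alt: "monoid_gen X = {x. \<exists>T c. finite T \<and> T \<subseteq> X \<and> (\<forall>v\<in>T. c v \<ge> 0) \<and> x = (\<Sum>v\<in>T. c v *s v)}"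
  by (simp add: monoid_gen_def smult_chi)

lemma sum_ext0:
  fixes c :: "int^'n \<Rightarrow> int"
  assumes "finite T'" "T \<subseteq> T'"
  shows "(\<Sum>v\<in>T. c v *s v) = (\<Sum>v\<in>T'. (if v \<in> T then c v else 0) *s v)"
proof -
  have "(\<Sum>v\<in>T'. (if v \<in> T then c v else 0) *s v) = (\<Sum>v\<in>T'. if v \<in> T then c v *s v else 0)"
    by (intro sum.cong) auto
  also have "\<dots> = (\<Sum>v\<in>T' \<inter> T. c v *s v)" by (simp add: sum.inter_restrict[OF assms(1)])
  also have "\<dots> = (\<Sum>v\<in>T. c v *s v)" using assms(2) by (simp add: Int_absorb1)
  finally show ?thesis by (rule sym)
qed

lemma smult_sum: "(c::int) *s (\<Sum>v\<in>T. f v) = (\<Sum>v\<in>T. c *s f v)"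
  by (simp add: vec_eq_iff sum_distrib_left)

lemma sum_smult_add: "(\<Sum>v\<in>T. (a v + b v) *s (v::int^'n)) = (\<Sum>v\<in>T. a v *s v) + (\<Sum>v\<in>T. b v *s v)"
  by (simp only: vector_sadd_rdistrib sum.distrib)

lemma grp_add: assumes "x \<in> grp X" "y \<in> grp X" shows "x + y \<in> grp X"
proof -
  obtain T1 c1 where 1: "finite T1" "T1 \<subseteq> X" "x = (\<Sum>v\<in>T1. c1 v *s v)" using assms(1) by (auto simp: grp_alt)
  obtain T2 c2 where 2: "finite T2" "T2 \<subseteq> X" "y = (\<Sum>v\<in>T2. c2 v *s v)" using assms(2) by (auto simp: grp_alt)
  have "x = (\<Sum>v\<in>T1\<union>T2. (if v \<in> T1 then c1 v else 0) *s v)" unfolding 1(3) using 1 2 by (intro sum_ext0) auto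
  moreover have "y = (\<Sum>v\<in>T1\<union>T2. (if v \<in> T2 then c2 v else 0) *s v)" unfolding 2(3) using 1 2 by (intro sum_ext0) auto
  ultimately have "x + y = (\<Sum>v\<in>T1\<union>T2. ((if v \<in> T1 then c1 v else 0) + (if v \<in> T2 then c2 v else 0)) *s v)"
    by (simp only: sum_smult_add)
  then show ?thesis unfolding grp_alt
    by (intro CollectI exI[of _ "T1 \<union> T2"] exI[of _ "\<lambda>v. (if v \<in> T1 then c1 v else 0) + (if v \<in> T2 then c2 v else 0)"] conjI)
       (use 1 2 in auto)
qed

lemma grp_smult: assumes "x \<in> grp X" shows "c *s x \<in> grp X"
proof -
  obtain T1 c1 where 1: "finite T1" "T1 \<subseteq> X" "x = (\<Sum>v\<in>T1. c1 v *s v)" using assms(1) by (auto simp: grp_alt)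
  have "c *s x = (\<Sum>v\<in>T1. (c * c1 v) *s v)" using 1 by (simp add: smult_sum)
  then show ?thesis unfolding grp_alt
    by (intro CollectI exI[of _ T1] exI[of _ "\<lambda>v. c * c1 v"] conjI) (use 1 in auto)
qed

lemma grp_zero: "0 \<in> grp X"
  unfolding grp_alt by (rule CollectI, rule exI[of _ "{}"]) auto

lemma grp_base: "x \<in> X \<Longrightarrow> x \<in> grp X"
  unfolding grp_alt by (rule CollectI, rule exI[of _ "{x}"], rule exI[of _ "\<lambda>_. 1"]) auto

lemma grp_neg: "x \<in> grp X \<Longrightarrow> - x \<in> grp X"
proof -
  assume "x \<in> grp X"
  moreover have "(-1) *s x = - x" by (simp add: vec_eq_iff)
  ultimately show ?thesis using grp_smult[of x X "-1"] by simp
qed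

lemma grp_diff: "x \<in> grp X \<Longrightarrow> y \<in> grp X \<Longrightarrow> x - y \<in> grp X"
  using grp_add grp_neg by (metis diff_conv_add_uminus)

lemma grp_sum: "finite I \<Longrightarrow> (\<And>i. i \<in> I \<Longrightarrow> f i \<in> grp X) \<Longrightarrow> sum f I \<in> grp X"
  by (induction I rule: finite_induct) (auto intro: grp_add grp_zero)

lemma grp_minimal:
  assumes "0 \<in> D" "\<And>x y. x\<in>D \<Longrightarrow> y\<in>D \<Longrightarrow> x+y \<in> D" "\<And>c x. x\<in>D \<Longrightarrow> c *s x \<in> D" "X \<subseteq> D"
  shows "grp X \<subseteq> D"
proof
  fix x assume "x \<in> grp X"
  then obtain T c where T: "finite T" "T \<subseteq> X" "x = (\<Sum>v\<in>T. c v *s v)" by (auto simp: grp_alt)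
  have "(\<Sum>v\<in>T. c v *s v) \<in> D" using T(1,2)
    by (induction T rule: finite_induct) (use assms in auto)
  then show "x \<in> D" using T by simp
qed

lemma mg_add: assumes "x \<in> monoid_gen X" "y \<in> monoid_gen X" shows "x + y \<in> monoid_gen X"
proof -
  obtain T1 c1 where 1: "finite T1" "T1 \<subseteq> X" "\<forall>v\<in>T1. c1 v \<ge> 0" "x = (\<Sum>v\<in>T1. c1 v *s v)" using assms(1) by (auto simp: monoid_gen_alt)
  obtain T2 c2 where 2: "finite T2" "T2 \<subseteq> X" "\<forall>v\<in>T2. c2 v \<ge> 0" "y = (\<Sum>v\<in>T2. c2 v *s v)" using assms(2) by (auto simp: monoid_gen_alt)
  have "(\<Sum>v\<in>T1. c1 v *s v) = (\<Sum>v\<in>T1\<union>T2. (if v \<in> T1 then c1 v else 0) *s v)" using 1 2 by (intro sum_ext0) auto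
  then have "x = (\<Sum>v\<in>T1\<union>T2. (if v \<in> T1 then c1 v else 0) *s v)" using 1(4) by simp
  moreover have "(\<Sum>v\<in>T2. c2 v *s v) = (\<Sum>v\<in>T1\<union>T2. (if v \<in> T2 then c2 v else 0) *s v)" using 1 2 by (intro sum_ext0) auto
  then have "y = (\<Sum>v\<in>T1\<union>T2. (if v \<in> T2 then c2 v else 0) *s v)" using 2(4) by simp
  ultimately have "x + y = (\<Sum>v\<in>T1\<union>T2. ((if v \<in> T1 then c1 v else 0) + (if v \<in> T2 then c2 v else 0)) *s v)"
    by (simp only: sum_smult_add)
  moreover have "\<forall>v\<in>T1\<union>T2. ((if v \<in> T1 then c1 v else 0) + (if v \<in> T2 then c2 v else 0)) \<ge> 0"
    using 1 2 by auto
  ultimately show ?thesis unfolding monoid_gen_alt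
    by (intro CollectI exI[of _ "T1 \<union> T2"] exI[of _ "\<lambda>v. (if v \<in> T1 then c1 v else 0) + (if v \<in> T2 then c2 v else 0)"] conjI)
       (use 1 2 in auto)
qed

lemma mg_smult: assumes "x \<in> monoid_gen X" "c \<ge> 0" shows "c *s x \<in> monoid_gen X"
proof -
  obtain T1 c1 where 1: "finite T1" "T1 \<subseteq> X" "\<forall>v\<in>T1. c1 v \<ge> 0" "x = (\<Sum>v\<in>T1. c1 v *s v)" using assms(1) by (auto simp: monoid_gen_alt)
  have "c *s x = (\<Sum>v\<in>T1. (c * c1 v) *s v)" using 1 by (simp add: smult_sum)
  moreover have "\<forall>v\<in>T1. c * c1 v \<ge> 0" using 1 assms by auto
  ultimately show ?thesis unfolding monoid_gen_alt
    by (intro CollectI exI[of _ T1] exI[of _ "\<lambda>v. c * c1 v"] conjI) (use 1 in auto)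
qed

lemma mg_zero: "0 \<in> monoid_gen X"
  unfolding monoid_gen_alt by (rule CollectI, rule exI[of _ "{}"]) auto

lemma mg_sum: "finite I \<Longrightarrow> (\<And>i. i \<in> I \<Longrightarrow> f i \<in> monoid_gen X) \<Longrightarrow> sum f I \<in> monoid_gen X"
  by (induction I rule: finite_induct) (auto intro: mg_add mg_zero)

lemma rvec_add: "rvec (a + b) = rvec a + rvec b" by (simp add: rvec_def vec_eq_iff)
lemma rvec_diff: "rvec (a - b) = rvec a - rvec b" by (simp add: rvec_def vec_eq_iff)
lemma rvec_zero: "rvec 0 = 0" by (simp add: rvec_def vec_eq_iff)
lemma rvec_smult: "rvec (c *s a) = real_of_int c *\<^sub>R rvec a" by (simp add: rvec_def vec_eq_iff)
lemma rvec_sum: "rvec (sum f I) = (\<Sum>i\<in>I. rvec (f i))"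
  by (simp add: rvec_def vec_eq_iff)
lemma rlf_inner: "rlf \<sigma> x = rvec \<sigma> \<bullet> x" by (simp add: rlf_def rvec_def inner_vec_def)
lemma ilf_inner: "real_of_int (ilf \<sigma> v) = rvec \<sigma> \<bullet> rvec v" by (simp add: ilf_def rvec_def inner_vec_def)

lemma grp_vanish:
  assumes "\<forall>v\<in>X. l \<bullet> rvec v = 0" "x \<in> grp X"
  shows "l \<bullet> rvec x = 0"
proof -
  obtain T c where T: "finite T" "T \<subseteq> X" "x = (\<Sum>v\<in>T. c v *s v)" using assms(2) by (auto simp: grp_alt)
  have "l \<bullet> rvec x = (\<Sum>v\<in>T. c v * (l \<bullet> rvec v))" using T by (simp add: rvec_sum rvec_smult inner_sum_right)
  also have "\<dots> = 0" using T assms(1) by (intro sum.neutral) auto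
  finally show ?thesis .
qed

lemma grp_span:
  assumes "rvec ` X \<subseteq> span A" "x \<in> grp X"
  shows "rvec x \<in> span A"
proof -
  obtain T c where T: "finite T" "T \<subseteq> X" "x = (\<Sum>v\<in>T. c v *s v)" using assms(2) by (auto simp: grp_alt)
  have "rvec x = (\<Sum>v\<in>T. real_of_int (c v) *\<^sub>R rvec v)" using T by (simp add: rvec_sum rvec_smult)
  also have "\<dots> \<in> span A" using T assms(1) by (intro span_sum span_scale) (auto intro: span_base)
  finally show ?thesis .
qed

lemma span_full:
  assumes "\<And>v::int^'n. rvec v \<in> span A"
  shows "span A = UNIV"
proof -
  { fix x :: "real^'n"
    have "x = (\<Sum>t\<in>UNIV. x $ t *\<^sub>R rvec (axis t 1))"
      by (simp add: vec_eq_iff rvec_def axis_def if_distrib cong: if_cong)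
    also have "\<dots> \<in> span A" using assms by (intro span_sum span_scale) auto
    finally have "x \<in> span A" . }
  then show ?thesis by auto
qed



locale thm4 =
  fixes S :: "(int^'n) set" and F :: "(real^'n) set" and k :: nat and \<gamma> :: "nat \<Rightarrow> int^'n"
    and G0 :: "(int^'n) set" and l :: "real^'n"
  assumes S_eq: "S = monoid_gen G0" and grpS: "grp S = UNIV"
    and lpos: "\<forall>x\<in>pos S. l \<bullet> x \<ge> 0" and F_eq: "F = {x\<in>pos S. l \<bullet> x = 0}"
    and gS: "\<forall>j<k. \<gamma> j \<in> S" and fb: "free_basis_mod S F k \<gamma>"
begin

definition gsum :: "(nat \<Rightarrow> int) \<Rightarrow> int^'n" where "gsum c = (\<Sum>j<k. c j *s \<gamma> j)"

abbreviation "U \<equiv> grp (lat_in S F)"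

lemma fb': "\<forall>x\<in>S_loc S F.
        (\<exists>m::nat\<Rightarrow>nat. x - gsum (\<lambda>j. int (m j)) \<in> U) \<and>
        (\<forall>m m'::nat\<Rightarrow>nat.
           x - gsum (\<lambda>j. int (m j)) \<in> U \<longrightarrow>
           x - gsum (\<lambda>j. int (m' j)) \<in> U \<longrightarrow>
           (\<forall>j<k. m j = m' j))"
  using fb by (simp add: free_basis_mod_def gsum_def smult_chi)

lemma S_add: "x\<in>S \<Longrightarrow> y\<in>S \<Longrightarrow> x+y \<in> S" using mg_add S_eq by blast
lemma S_zero: "0 \<in> S" using mg_zero S_eq by blast

lemma gsum_nat_S: "gsum (\<lambda>j. int (m j)) \<in> S"
  unfolding gsum_def S_eq using gS S_eq by (intro mg_sum mg_smult) auto

lemma gsum_diff: "gsum a - gsum b = gsum (\<lambda>j. a j - b j)"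
  by (simp add: gsum_def vec_eq_iff sum_subtractf[symmetric] left_diff_distrib)
lemma gsum_add: "gsum a + gsum b = gsum (\<lambda>j. a j + b j)"
  by (simp add: gsum_def vec_eq_iff sum.distrib[symmetric] distrib_right)
lemma gsum_smult: "c *s gsum a = gsum (\<lambda>j. c * a j)"
  by (simp add: gsum_def vec_eq_iff sum_distrib_left mult.assoc)
lemma gsum_zero: "(\<And>j. j < k \<Longrightarrow> a j = 0) \<Longrightarrow> gsum a = 0"
  by (simp add: gsum_def vec_eq_iff)

lemma rvec_pos: "s \<in> S \<Longrightarrow> rvec s \<in> pos S"
  unfolding pos_def by (rule CollectI, rule exI[of _ "{s}"], rule exI[of _ "\<lambda>_. 1"]) auto
lemma zero_pos: "0 \<in> pos S"
  unfolding pos_def by (rule CollectI, rule exI[of _ "{}"]) auto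
lemma zero_L: "0 \<in> lat_in S F"
  using S_zero zero_pos by (simp add: lat_in_def rvec_zero F_eq)
lemma S_loc_S: "s \<in> S \<Longrightarrow> s \<in> S_loc S F"
  unfolding S_loc_def using zero_L by force

lemma uniq:
  assumes "v - gsum c \<in> U" "v - gsum c' \<in> U" "j < k"
  shows "c j = c' j"
proof -
  define d where "d = (\<lambda>j. c j - c' j)"
  define m where "m = (\<lambda>j. nat (d j))"
  define m' where "m' = (\<lambda>j. nat (- d j))"
  define x where "x = gsum (\<lambda>j. int (m j))"
  have xS: "x \<in> S_loc S F" unfolding x_def by (rule S_loc_S[OF gsum_nat_S])
  have 1: "x - gsum (\<lambda>j. int (m j)) \<in> U" unfolding x_def by (simp add: grp_zero)
  have "x - gsum (\<lambda>j. int (m' j)) = gsum d"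
    unfolding x_def gsum_diff m_def m'_def by (rule arg_cong[where f=gsum]) auto
  also have "\<dots> = (v - gsum c') - (v - gsum c)" by (simp add: gsum_diff d_def)
  also have "\<dots> \<in> U" by (rule grp_diff[OF assms(2) assms(1)])
  finally have 2: "x - gsum (\<lambda>j. int (m' j)) \<in> U" .
  have "m j = m' j" using conjunct2[OF bspec[OF fb' xS], rule_format, OF 1 2] assms(3) by simp
  then show ?thesis unfolding m_def m'_def d_def by auto
qed

lemma exist: "\<exists>c. v - gsum c \<in> U"
proof -
  have "grp S \<subseteq> {v. \<exists>c. v - gsum c \<in> U}"
  proof (rule grp_minimal)
    show "0 \<in> {v. \<exists>c. v - gsum c \<in> U}"
      using gsum_zero[of "\<lambda>_. 0"] grp_zero by (intro CollectI exI[of _ "\<lambda>_. 0"]) simp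
  next
    fix x y assume "x \<in> {v. \<exists>c. v - gsum c \<in> U}" "y \<in> {v. \<exists>c. v - gsum c \<in> U}"
    then obtain c1 c2 where "x - gsum c1 \<in> U" "y - gsum c2 \<in> U" by auto
    then have "(x - gsum c1) + (y - gsum c2) \<in> U" by (rule grp_add)
    moreover have "(x - gsum c1) + (y - gsum c2) = (x + y) - gsum (\<lambda>j. c1 j + c2 j)"
      by (simp add: gsum_add[symmetric])
    ultimately show "x + y \<in> {v. \<exists>c. v - gsum c \<in> U}" by auto
  next
    fix c x assume "x \<in> {v. \<exists>c. v - gsum c \<in> U}"
    then obtain c1 where "x - gsum c1 \<in> U" by auto
    then have "c *s (x - gsum c1) \<in> U" by (rule grp_smult)
    moreover have "c *s (x - gsum c1) = c *s x - gsum (\<lambda>j. c * c1 j)"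
      by (simp add: gsum_smult[symmetric] vector_ssub_ldistrib)
    ultimately show "c *s x \<in> {v. \<exists>c. v - gsum c \<in> U}" by auto
  next
    show "S \<subseteq> {v. \<exists>c. v - gsum c \<in> U}"
    proof
      fix s assume "s \<in> S"
      then obtain m where "s - gsum (\<lambda>j. int (m j)) \<in> U" using conjunct1[OF bspec[OF fb' S_loc_S]] by blast
      then show "s \<in> {v. \<exists>c. v - gsum c \<in> U}" by auto
    qed
  qed
  then show ?thesis using grpS by auto
qed

definition \<sigma> :: "nat \<Rightarrow> int^'n" where
  "\<sigma> j = (\<chi> t. (SOME c. axis t 1 - gsum c \<in> U) j)"

lemma sigma_prop: "v - gsum (\<lambda>j. ilf (\<sigma> j) v) \<in> U"
proof -
  define a where "a = (\<lambda>t. SOME c. axis t (1::int) - gsum c \<in> U)"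
  have A: "\<And>t. axis t 1 - gsum (a t) \<in> U" unfolding a_def using exist by (rule someI_ex)
  have "v - gsum (\<lambda>j. ilf (\<sigma> j) v) = (\<Sum>t\<in>UNIV. v$t *s (axis t 1 - gsum (a t)))"
  proof -
    have e: "(\<Sum>t\<in>UNIV. v$t *s (axis t 1 - gsum (a t))) = (\<Sum>t\<in>UNIV. v$t *s axis t 1) - (\<Sum>t\<in>UNIV. v$t *s gsum (a t))"
      by (simp add: vector_ssub_ldistrib sum_subtractf)
    have \<sigma>a: "\<And>j. \<sigma> j = (\<chi> t. a t j)" unfolding \<sigma>_def a_def by simp
    have comp: "(\<Sum>t\<in>UNIV. v$t * (\<Sum>j<k. a t j * \<gamma> j $ i)) = (\<Sum>j<k. (\<Sum>t\<in>UNIV. a t j * v$t) * \<gamma> j $ i)" for i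
    proof -
      have "(\<Sum>t\<in>UNIV. v$t * (\<Sum>j<k. a t j * \<gamma> j $ i)) = (\<Sum>t\<in>UNIV. \<Sum>j<k. a t j * v$t * \<gamma> j $ i)"
        by (simp add: sum_distrib_left mult_ac)
      also have "\<dots> = (\<Sum>j<k. \<Sum>t\<in>UNIV. a t j * v$t * \<gamma> j $ i)" by (rule sum.swap)
      also have "\<dots> = (\<Sum>j<k. (\<Sum>t\<in>UNIV. a t j * v$t) * \<gamma> j $ i)" by (simp add: sum_distrib_right)
      finally show ?thesis .
    qed
    have "(\<Sum>t\<in>UNIV. v$t *s gsum (a t)) $ i = gsum (\<lambda>j. ilf (\<sigma> j) v) $ i" for i
    proof -
      have "(\<Sum>t\<in>UNIV. v$t *s gsum (a t)) $ i = (\<Sum>t\<in>UNIV. v$t * (\<Sum>j<k. a t j * \<gamma> j $ i))"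
        by (simp add: gsum_def)
      moreover have "gsum (\<lambda>j. ilf (\<sigma> j) v) $ i = (\<Sum>j<k. (\<Sum>t\<in>UNIV. a t j * v$t) * \<gamma> j $ i)"
        by (simp add: gsum_def ilf_def \<sigma>a)
      ultimately show ?thesis using comp by simp
    qed
    then have "(\<Sum>t\<in>UNIV. v$t *s gsum (a t)) = gsum (\<lambda>j. ilf (\<sigma> j) v)" by (simp add: vec_eq_iff)
    then show ?thesis using e basis_expansion[of v] by simp
  qed
  also have "\<dots> \<in> U" using A by (intro grp_sum grp_smult) auto
  finally show ?thesis .
qed

lemma coef: "v - gsum c \<in> U \<Longrightarrow> j < k \<Longrightarrow> c j = ilf (\<sigma> j) v"
  by (rule uniq[OF _ sigma_prop])

lemma ilf_gamma: "i < k \<Longrightarrow> j < k \<Longrightarrow> ilf (\<sigma> i) (\<gamma> j) = (if i = j then 1 else 0)"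
proof -
  assume ij: "i < k" "j < k"
  have "gsum (\<lambda>i. if i = j then 1 else 0) = \<gamma> j"
  proof -
    have "gsum (\<lambda>i. if i = j then 1 else 0) = (\<Sum>i<k. if i = j then \<gamma> i else 0)"
      unfolding gsum_def by (rule sum.cong) (auto simp: vec_eq_iff)
    also have "\<dots> = \<gamma> j" using ij by (simp add: sum.delta)
    finally show ?thesis .
  qed
  then have "\<gamma> j - gsum (\<lambda>i. if i = j then 1 else 0) \<in> U" by (simp add: grp_zero)
  from coef[OF this ij(1)] show ?thesis by simp
qed

lemma ilf_S_nonneg: "s \<in> S \<Longrightarrow> i < k \<Longrightarrow> ilf (\<sigma> i) s \<ge> 0"
proof -
  assume "s \<in> S" "i < k"
  then obtain m where "s - gsum (\<lambda>j. int (m j)) \<in> U" using conjunct1[OF bspec[OF fb' S_loc_S]] by blast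
  from coef[OF this \<open>i<k\<close>] show ?thesis by simp
qed

lemma ilf_U: "u \<in> U \<Longrightarrow> i < k \<Longrightarrow> ilf (\<sigma> i) u = 0"
proof -
  assume "u \<in> U" "i < k"
  then have "u - gsum (\<lambda>_. 0) \<in> U" using gsum_zero[of "\<lambda>_. 0"] by simp
  from coef[OF this \<open>i<k\<close>] show ?thesis by simp
qed

lemma U_char: "(\<And>i. i < k \<Longrightarrow> ilf (\<sigma> i) v = 0) \<Longrightarrow> v \<in> U"
  using sigma_prop[of v] gsum_zero[of "\<lambda>j. ilf (\<sigma> j) v"] by simp

lemma l_U: "u \<in> U \<Longrightarrow> l \<bullet> rvec u = 0"
  by (rule grp_vanish) (auto simp: lat_in_def F_eq)

end


lemma zero_terms:
  fixes c f :: "'a \<Rightarrow> real"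
  assumes "finite T" "\<forall>v\<in>T. c v \<ge> 0" "\<forall>v\<in>T. f v \<ge> 0" "(\<Sum>v\<in>T. c v * f v) = 0" "v \<in> T" "c v \<noteq> 0"
  shows "f v = 0"
proof -
  have nn: "\<forall>v\<in>T. 0 \<le> c v * f v" using assms(2,3) by auto
  have "(\<Sum>v\<in>T. c v * f v) = 0 \<longleftrightarrow> (\<forall>v\<in>T. c v * f v = 0)"
    by (rule sum_nonneg_eq_0_iff[OF assms(1)]) (use nn in auto)
  then have "\<forall>v\<in>T. c v * f v = 0" using assms(4) by simp
  then show ?thesis using assms(5,6) by auto
qed

lemma inner_comb: "w \<bullet> (\<Sum>v\<in>T. c v *\<^sub>R rvec v) = (\<Sum>v\<in>T. c v * (w \<bullet> rvec v))"
  by (simp add: inner_sum_right)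

lemma pos_elim: "x \<in> pos S \<Longrightarrow> \<exists>T c. finite T \<and> T \<subseteq> S \<and> (\<forall>v\<in>T. c v \<ge> 0) \<and> x = (\<Sum>v\<in>T. c v *\<^sub>R rvec v)"
  by (simp add: pos_def)

lemma dim_full:
  assumes "\<And>v::int^'n. rvec v \<in> span A"
  shows "dim A = CARD('n)"
proof -
  have "dim A = dim (span A)" by simp
  also have "\<dots> = dim (UNIV :: (real^'n) set)" using span_full[OF assms] by simp
  also have "\<dots> = CARD('n)" by simp
  finally show ?thesis .
qed

context thm4 begin

abbreviation Z where "Z i \<equiv> {x\<in>pos S. rlf (\<sigma> i) x = 0}"

lemma rlf_rvec: "rlf (\<sigma> i) (rvec v) = real_of_int (ilf (\<sigma> i) v)"
  by (simp add: rlf_inner ilf_inner)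

lemma rlf_nonneg: "x \<in> pos S \<Longrightarrow> i < k \<Longrightarrow> rlf (\<sigma> i) x \<ge> 0"
proof -
  assume x: "x \<in> pos S" and i: "i < k"
  obtain T c where T: "finite T" "T \<subseteq> S" "\<forall>v\<in>T. c v \<ge> 0" "x = (\<Sum>v\<in>T. c v *\<^sub>R rvec v)"
    using pos_elim[OF x] by blast
  have "rlf (\<sigma> i) x = (\<Sum>v\<in>T. c v * real_of_int (ilf (\<sigma> i) v))"
    unfolding rlf_inner T(4) inner_comb by (simp add: ilf_inner)
  also have "\<dots> \<ge> 0" using T ilf_S_nonneg[OF _ i] by (intro sum_nonneg) auto
  finally show ?thesis .
qed

lemma F_sub_Z: "x \<in> F \<Longrightarrow> i < k \<Longrightarrow> rlf (\<sigma> i) x = 0"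
proof -
  assume x: "x \<in> F" and i: "i < k"
  then have xp: "x \<in> pos S" "l \<bullet> x = 0" by (auto simp: F_eq)
  obtain T c where T: "finite T" "T \<subseteq> S" "\<forall>v\<in>T. c v \<ge> 0" "x = (\<Sum>v\<in>T. c v *\<^sub>R rvec v)"
    using pos_elim[OF xp(1)] by blast
  have s0: "(\<Sum>v\<in>T. c v * (l \<bullet> rvec v)) = 0" using xp(2) by (simp add: T(4) inner_comb)
  have lnn: "\<forall>v\<in>T. l \<bullet> rvec v \<ge> 0" using T(2) lpos rvec_pos by blast
  have "\<forall>v\<in>T. c v * real_of_int (ilf (\<sigma> i) v) = 0"
  proof
    fix v assume v: "v \<in> T"
    show "c v * real_of_int (ilf (\<sigma> i) v) = 0"
    proof (cases "c v = 0")
      case False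
      then have "l \<bullet> rvec v = 0" using zero_terms[OF T(1) T(3) lnn s0 v] by simp
      then have "v \<in> lat_in S F" using v T(2) rvec_pos by (auto simp: lat_in_def F_eq)
      then have "ilf (\<sigma> i) v = 0" using ilf_U[OF grp_base i] by blast
      then show ?thesis by simp
    qed simp
  qed
  then have "(\<Sum>v\<in>T. c v * real_of_int (ilf (\<sigma> i) v)) = 0" by (intro sum.neutral) auto
  then show ?thesis unfolding rlf_inner T(4) inner_comb by (simp add: ilf_inner)
qed

lemma F_char: "F = {x\<in>pos S. \<forall>i<k. rlf (\<sigma> i) x = 0}"
proof
  show "F \<subseteq> {x\<in>pos S. \<forall>i<k. rlf (\<sigma> i) x = 0}" using F_sub_Z by (auto simp: F_eq)
next
  show "{x\<in>pos S. \<forall>i<k. rlf (\<sigma> i) x = 0} \<subseteq> F"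
  proof
    fix x assume "x \<in> {x\<in>pos S. \<forall>i<k. rlf (\<sigma> i) x = 0}"
    then have xp: "x \<in> pos S" "\<forall>i<k. rlf (\<sigma> i) x = 0" by auto
    obtain T c where T: "finite T" "T \<subseteq> S" "\<forall>v\<in>T. c v \<ge> 0" "x = (\<Sum>v\<in>T. c v *\<^sub>R rvec v)"
      using pos_elim[OF xp(1)] by blast
    have "\<forall>v\<in>T. c v * (l \<bullet> rvec v) = 0"
    proof
      fix v assume v: "v \<in> T"
      show "c v * (l \<bullet> rvec v) = 0"
      proof (cases "c v = 0")
        case False
        have "ilf (\<sigma> i) v = 0" if i: "i < k" for i
        proof -
          have s0: "(\<Sum>v\<in>T. c v * real_of_int (ilf (\<sigma> i) v)) = 0"
            using xp(2) i unfolding rlf_inner T(4) inner_comb by (simp add: ilf_inner)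
          have "\<forall>v\<in>T. real_of_int (ilf (\<sigma> i) v) \<ge> 0" using T(2) ilf_S_nonneg[OF _ i] by auto
          from zero_terms[OF T(1) T(3) this s0 v False] show ?thesis by simp
        qed
        then have "v \<in> U" by (rule U_char)
        then show ?thesis using l_U by simp
      qed simp
    qed
    then have "(\<Sum>v\<in>T. c v * (l \<bullet> rvec v)) = 0" by (intro sum.neutral) auto
    then have "l \<bullet> x = 0" by (simp add: T(4) inner_comb)
    then show "x \<in> F" using xp(1) by (simp add: F_eq)
  qed
qed

lemma sigma_nonzero: "i < k \<Longrightarrow> rvec (\<sigma> i) \<noteq> 0"
proof
  assume i: "i < k" and "rvec (\<sigma> i) = 0"
  then have "real_of_int (ilf (\<sigma> i) (\<gamma> i)) = 0" by (simp add: ilf_inner)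
  then show False using ilf_gamma[OF i i] by simp
qed

lemma gamma_Z: "i < k \<Longrightarrow> j < k \<Longrightarrow> i \<noteq> j \<Longrightarrow> rvec (\<gamma> j) \<in> Z i"
  using rvec_pos gS rlf_rvec ilf_gamma by simp

lemma H_dim: "i < k \<Longrightarrow> dim {x. rvec (\<sigma> i) \<bullet> x = 0} = CARD('n) - 1"
  using dim_hyperplane[OF sigma_nonzero] by simp

lemma Z_dim: assumes i: "i < k" shows "dim (Z i) = CARD('n) - 1"
proof -
  have "Z i \<subseteq> {x. rvec (\<sigma> i) \<bullet> x = 0}" by (auto simp: rlf_inner)
  then have le: "dim (Z i) \<le> CARD('n) - 1" using dim_subset H_dim[OF i] by metis
  define A where "A = insert (rvec (\<gamma> i)) (Z i)"
  have FZ: "F \<subseteq> Z i" using F_sub_Z[OF _ i] by (auto simp: F_eq)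
  have "rvec v \<in> span A" for v
  proof -
    define c where "c = (\<lambda>j. ilf (\<sigma> j) v)"
    have u: "v - gsum c \<in> U" unfolding c_def by (rule sigma_prop)
    have "rvec ` lat_in S F \<subseteq> span A" using FZ by (auto simp: lat_in_def A_def intro: span_base)
    from grp_span[OF this u] have 1: "rvec (v - gsum c) \<in> span A" .
    have "rvec (gsum c) = (\<Sum>j<k. real_of_int (c j) *\<^sub>R rvec (\<gamma> j))"
      by (simp add: gsum_def rvec_sum rvec_smult)
    also have "\<dots> \<in> span A"
    proof (intro span_sum span_scale)
      fix j assume j: "j \<in> {..<k}"
      show "rvec (\<gamma> j) \<in> span A"
      proof (cases "j = i")
        case True then show ?thesis by (auto simp: A_def intro: span_base)
      next
        case False then show ?thesis using gamma_Z[OF i _ ] j by (auto simp: A_def intro: span_base)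
      qed
    qed
    finally have 2: "rvec (gsum c) \<in> span A" .
    have "rvec v = rvec (v - gsum c) + rvec (gsum c)" by (simp add: rvec_add[symmetric])
    then show ?thesis using 1 2 span_add by metis
  qed
  then have "dim A = CARD('n)" by (rule dim_full)
  moreover have "dim A \<le> dim (Z i) + 1" unfolding A_def dim_insert by simp
  ultimately show ?thesis using le by linarith
qed

lemma Z_facet: "i < k \<Longrightarrow> is_facet S (Z i)"
  unfolding is_facet_def is_face_def
  by (intro conjI exI[of _ "rvec (\<sigma> i)"]) (auto simp: Z_dim rlf_nonneg rlf_inner[symmetric])

lemma Z_inj: "inj_on Z {..<k}"
proof (rule inj_onI)
  fix i j assume i: "i \<in> {..<k}" and j: "j \<in> {..<k}" and eq: "Z i = Z j"
  show "i = j"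
  proof (rule ccontr)
    assume "i \<noteq> j"
    then have "rvec (\<gamma> j) \<in> Z i" using gamma_Z i j by auto
    then have "rvec (\<gamma> j) \<in> Z j" using eq by simp
    then show False using rlf_rvec ilf_gamma j by simp
  qed
qed

lemma dim_posS: "dim (pos S) = CARD('n)"
proof (rule dim_full)
  fix v :: "int^'n"
  have "rvec ` S \<subseteq> span (pos S)" using rvec_pos by (auto intro: span_base)
  moreover have "v \<in> grp S" using grpS by simp
  ultimately show "rvec v \<in> span (pos S)" by (rule grp_span)
qed

lemma expand:
  assumes wL: "\<forall>s\<in>lat_in S F. w \<bullet> rvec s = 0" and x: "x \<in> pos S"
  shows "w \<bullet> x = (\<Sum>j<k. (w \<bullet> rvec (\<gamma> j)) * rlf (\<sigma> j) x)"
proof -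
  have ev: "w \<bullet> rvec v = (\<Sum>j<k. (w \<bullet> rvec (\<gamma> j)) * real_of_int (ilf (\<sigma> j) v))" for v
  proof -
    define c where "c = (\<lambda>j. ilf (\<sigma> j) v)"
    have u: "v - gsum c \<in> U" unfolding c_def by (rule sigma_prop)
    have 1: "w \<bullet> rvec (v - gsum c) = 0" by (rule grp_vanish[OF wL u])
    have 2: "w \<bullet> rvec (gsum c) = (\<Sum>j<k. (w \<bullet> rvec (\<gamma> j)) * real_of_int (c j))"
      by (simp add: gsum_def rvec_sum rvec_smult inner_sum_right mult.commute)
    have "rvec v = rvec (v - gsum c) + rvec (gsum c)" by (simp add: rvec_add[symmetric])
    then have "w \<bullet> rvec v = w \<bullet> rvec (v - gsum c) + w \<bullet> rvec (gsum c)" by (simp add: inner_add_right)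
    then show ?thesis using 1 2 by (simp add: c_def)
  qed
  obtain T c where T: "finite T" "T \<subseteq> S" "\<forall>v\<in>T. c v \<ge> 0" "x = (\<Sum>v\<in>T. c v *\<^sub>R rvec v)"
    using pos_elim[OF x] by blast
  have "w \<bullet> x = (\<Sum>v\<in>T. c v * (\<Sum>j<k. (w \<bullet> rvec (\<gamma> j)) * real_of_int (ilf (\<sigma> j) v)))"
    unfolding T(4) inner_comb by (rule sum.cong[OF refl]) (subst ev, rule refl)
  also have "\<dots> = (\<Sum>v\<in>T. \<Sum>j<k. (w \<bullet> rvec (\<gamma> j)) * (c v * real_of_int (ilf (\<sigma> j) v)))"
    by (simp add: sum_distrib_left mult.left_commute)
  also have "\<dots> = (\<Sum>j<k. \<Sum>v\<in>T. (w \<bullet> rvec (\<gamma> j)) * (c v * real_of_int (ilf (\<sigma> j) v)))"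
    by (rule sum.swap)
  also have "\<dots> = (\<Sum>j<k. (w \<bullet> rvec (\<gamma> j)) * (\<Sum>v\<in>T. c v * real_of_int (ilf (\<sigma> j) v)))"
    by (simp add: sum_distrib_left)
  also have "\<dots> = (\<Sum>j<k. (w \<bullet> rvec (\<gamma> j)) * rlf (\<sigma> j) x)"
    unfolding rlf_inner T(4) inner_comb by (simp add: ilf_inner)
  finally show ?thesis .
qed

lemma facet_Z:
  assumes G: "is_facet S G" and FG: "F \<subseteq> G"
  shows "\<exists>i<k. G = Z i"
proof -
  obtain w where w: "\<forall>x\<in>pos S. w \<bullet> x \<ge> 0" "G = {x\<in>pos S. w \<bullet> x = 0}"
    using G by (auto simp: is_facet_def is_face_def)
  have dG: "dim G = CARD('n) - 1" using G by (simp add: is_facet_def)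
  have wL: "\<forall>s\<in>lat_in S F. w \<bullet> rvec s = 0" using FG w(2) by (auto simp: lat_in_def)
  define lam where "lam = (\<lambda>j. w \<bullet> rvec (\<gamma> j))"
  have E: "\<And>x. x \<in> pos S \<Longrightarrow> w \<bullet> x = (\<Sum>j<k. lam j * rlf (\<sigma> j) x)"
    unfolding lam_def using expand[OF wL] by blast
  have lamnn: "\<And>j. j < k \<Longrightarrow> lam j \<ge> 0" unfolding lam_def using w(1) rvec_pos gS by blast
  have terms: "\<And>x j. x \<in> G \<Longrightarrow> j < k \<Longrightarrow> lam j * rlf (\<sigma> j) x = 0"
  proof -
    fix x j assume x: "x \<in> G" and j: "j < k"
    have xp: "x \<in> pos S" "w \<bullet> x = 0" using x w(2) by auto
    have nn: "\<forall>j\<in>{..<k}. 0 \<le> lam j * rlf (\<sigma> j) x" using lamnn rlf_nonneg[OF xp(1)] by auto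
    have "(\<Sum>j<k. lam j * rlf (\<sigma> j) x) = 0" using E[OF xp(1)] xp(2) by simp
    have "(\<Sum>j<k. lam j * rlf (\<sigma> j) x) = 0 \<longleftrightarrow> (\<forall>j\<in>{..<k}. lam j * rlf (\<sigma> j) x = 0)"
      by (rule sum_nonneg_eq_0_iff) (use nn in auto)
    then show "lam j * rlf (\<sigma> j) x = 0" using \<open>(\<Sum>j<k. lam j * rlf (\<sigma> j) x) = 0\<close> j by simp
  qed
  show ?thesis
  proof (cases "\<forall>j<k. lam j = 0")
    case True
    then have "G = pos S" using E w(2) by auto
    then have "dim G = CARD('n)" using dim_posS by simp
    moreover have "CARD('n) > 0" by (simp add: card_gt_0_iff)
    ultimately show ?thesis using dG by linarith
  next
    case False
    then obtain a where a: "a < k" "lam a \<noteq> 0" by blast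
    then have apos: "lam a > 0" using lamnn[of a] by linarith
    have others: "lam b = 0" if b: "b < k" "b \<noteq> a" for b
    proof (rule ccontr)
      assume "lam b \<noteq> 0"
      then have bpos: "lam b > 0" using lamnn[of b] b by linarith
      define V where "V = {x. rvec (\<sigma> a) \<bullet> x = 0 \<and> rvec (\<sigma> b) \<bullet> x = 0}"
      define H where "H = {x. rvec (\<sigma> a) \<bullet> x = 0}"
      have GV: "G \<subseteq> V"
      proof
        fix x assume x: "x \<in> G"
        have "rlf (\<sigma> a) x = 0" using terms[OF x a(1)] apos by simp
        moreover have "rlf (\<sigma> b) x = 0" using terms[OF x b(1)] bpos by simp
        ultimately show "x \<in> V" by (simp add: V_def rlf_inner)
      qed
      have sV: "subspace V" unfolding V_def subspace_def by (auto simp: inner_add_right)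
      have sH: "subspace H" unfolding H_def by (rule subspace_hyperplane)
      have "rvec (\<gamma> b) \<in> H" using ilf_gamma[OF a(1) b(1)] b(2) by (simp add: H_def ilf_inner[symmetric])
      moreover have "rvec (\<gamma> b) \<notin> V" using ilf_gamma[OF b(1) b(1)] by (simp add: V_def ilf_inner[symmetric])
      moreover have "V \<subseteq> H" by (auto simp: V_def H_def)
      ultimately have VH: "V \<subset> H" by blast
      have e: "span V = V" "span H = H" using sV sH by simp_all
      have "span V \<subset> span H" unfolding e by (rule VH)
      then have "dim V < dim H" by (rule dim_psubset)
      then have "dim V < CARD('n) - 1" using H_dim[OF a(1)] by (simp add: H_def)
      moreover have "dim G \<le> dim V" using GV by (rule dim_subset)
      ultimately show False using dG by linarith
    qed
    have "\<And>x. x \<in> pos S \<Longrightarrow> w \<bullet> x = lam a * rlf (\<sigma> a) x"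
    proof -
      fix x assume x: "x \<in> pos S"
      have "(\<Sum>j<k. lam j * rlf (\<sigma> j) x) = lam a * rlf (\<sigma> a) x + (\<Sum>j\<in>{..<k}-{a}. lam j * rlf (\<sigma> j) x)"
        using a(1) by (simp add: sum.remove)
      also have "(\<Sum>j\<in>{..<k}-{a}. lam j * rlf (\<sigma> j) x) = 0" using others by (intro sum.neutral) auto
      finally show "w \<bullet> x = lam a * rlf (\<sigma> a) x" using E[OF x] by simp
    qed
    then have "G = Z a" using w(2) apos by auto
    then show ?thesis using a(1) by blast
  qed
qed

lemma sigma_primitive: assumes i: "i < k" shows "primitive_form (\<sigma> i)"
proof -
  let ?g = "Gcd (range (\<lambda>t. \<sigma> i $ t))"
  have "?g dvd ilf (\<sigma> i) (\<gamma> i)" unfolding ilf_def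
    by (intro dvd_sum dvd_mult2 Gcd_dvd) auto
  then have "?g dvd 1" using ilf_gamma[OF i i] by simp
  moreover have "?g \<ge> 0" by simp
  ultimately show ?thesis unfolding primitive_form_def by simp
qed

end


theorem mainTheorem4:
  fixes S :: "(int^'n) set" and F :: "(real^'n) set"
    and k :: nat and \<gamma> :: "nat \<Rightarrow> int^'n"
  assumes "affine_semigroup S"
    and "is_face S F" and "F \<noteq> {}"
    and "\<forall>j<k. \<gamma> j \<in> S"
    and "free_basis_mod S F k \<gamma>"
  shows "\<exists>\<sigma> :: nat \<Rightarrow> int^'n.
     (\<forall>i<k. primitive_form (\<sigma> i) \<and> (\<forall>x\<in>pos S. rlf (\<sigma> i) x \<ge> 0) \<and>
            is_facet S {x \<in> pos S. rlf (\<sigma> i) x = 0} \<and>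
            F \<subseteq> {x \<in> pos S. rlf (\<sigma> i) x = 0}) \<and>
     inj_on (\<lambda>i. {x \<in> pos S. rlf (\<sigma> i) x = 0}) {..<k} \<and>
     {G. is_facet S G \<and> F \<subseteq> G} = (\<lambda>i. {x \<in> pos S. rlf (\<sigma> i) x = 0}) ` {..<k} \<and>
     F = {x \<in> pos S. \<forall>i<k. rlf (\<sigma> i) x = 0} \<and>
     (\<forall>i<k. \<forall>j<k. ilf (\<sigma> i) (\<gamma> j) = (if i = j then 1 else 0)) \<and>
     grp (lat_in S F) = {v \<in> grp S. \<forall>i<k. ilf (\<sigma> i) v = 0}"
proof -
  obtain G0 where G0: "S = monoid_gen G0" and grpS: "grp S = UNIV"
    using assms(1) by (auto simp: affine_semigroup_def)
  obtain l where l: "\<forall>x\<in>pos S. l \<bullet> x \<ge> 0" "F = {x\<in>pos S. l \<bullet> x = 0}"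
    using assms(2) by (auto simp: is_face_def)
  interpret T: thm4 S F k \<gamma> G0 l
    using G0 grpS l assms(4,5) by unfold_locales auto
  show ?thesis
  proof (intro exI[of _ T.\<sigma>] conjI)
    show "\<forall>i<k. primitive_form (T.\<sigma> i) \<and> (\<forall>x\<in>pos S. rlf (T.\<sigma> i) x \<ge> 0) \<and>
            is_facet S (T.Z i) \<and> F \<subseteq> T.Z i"
    proof (intro allI impI conjI)
      fix i assume i: "i < k"
      show "primitive_form (T.\<sigma> i)" by (rule T.sigma_primitive[OF i])
      show "\<forall>x\<in>pos S. rlf (T.\<sigma> i) x \<ge> 0" using T.rlf_nonneg i by blast
      show "is_facet S (T.Z i)" by (rule T.Z_facet[OF i])
      show "F \<subseteq> T.Z i" using T.F_sub_Z[OF _ i] l(2) by auto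
    qed
  next
    show "inj_on T.Z {..<k}" by (rule T.Z_inj)
  next
    show "{G. is_facet S G \<and> F \<subseteq> G} = T.Z ` {..<k}"
    proof
      show "{G. is_facet S G \<and> F \<subseteq> G} \<subseteq> T.Z ` {..<k}" using T.facet_Z by blast
      show "T.Z ` {..<k} \<subseteq> {G. is_facet S G \<and> F \<subseteq> G}"
        using T.Z_facet T.F_sub_Z l(2) by fastforce
    qed
  next
    show "F = {x \<in> pos S. \<forall>i<k. rlf (T.\<sigma> i) x = 0}" by (rule T.F_char)
  next
    show "\<forall>i<k. \<forall>j<k. ilf (T.\<sigma> i) (\<gamma> j) = (if i = j then 1 else 0)" using T.ilf_gamma by blast
  next
    show "grp (lat_in S F) = {v \<in> grp S. \<forall>i<k. ilf (T.\<sigma> i) v = 0}"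
      using T.ilf_U T.U_char grpS by blast
  qed
qed

end
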